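(* Under the standing assumptions, suppose $\lambda_i(\pi)\neq 0$ for some $i\in I$. Define $\pi'\in\mathbb{R}^n$ by $\pi'_j=\pi_j$ for $j\neq i$ and $\pi'_i=\pi_i+\lambda_i(\pi)$, and define $\pi'_0=\pi_0$ if $i\in S^{+}(\pi)$ and $\pi'_0=\pi_0+\lambda_i(\pi)$ otherwise. Then: (1) $\pi'^\top x\le\pi'_0$ holds for all $x\in X$; (2) $F(\pi,\pi_0)\subset F(\pi',\pi'_0)$ and $\dim F(\pi',\pi'_0)\ge \dim F(\pi,\pi_0)+1$; (3) for every $\bar x\in[0,1]^n$ with $\pi^\top\bar x>\pi_0$ we have $\pi'^\top\bar x>\pi'_0$.
   Context: Let $n\ge 1$, $I=\{1,\dots,n\}$ and $X\subseteq\{0,1\}^n$. Standing assumptions: (a) the inequality $\pi^\top x\le \pi_0$ is valid for $X$ and supports $\mathrm{conv}(X)$, i.e. $\pi_0=\max_{x\in X}\pi^\top x$; (b) for every $i\in I$ there exist $x,x'\in X$ with $x_i=0$ and $x'_i=1$. For any $(\sigma,\sigma_0)$, the face is $F(\sigma,\sigma_0):=\{x\in\mathrm{conv}(X):\sigma^\top x=\sigma_0\}$. The disjunctive slack vector $\lambda(\pi)\in\mathbb{R}^n$ is defined by $\lambda^0_i(\pi):=\max_{x\in X}\{\pi^\top x: x_i=0\}$, $\lambda^1_i(\pi):=\max_{x\in X}\{\pi^\top x:x_i=1\}$ and $\lambda_i(\pi):=\lambda^0_i(\pi)-\lambda^1_i(\pi)$ for $i\in I$. Let $S^{-}(\pi)=\{i\in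 I:\lambda_i(\pi)<0\}$, $S^{0}(\pi)=\{i\in I:\lambda_i(\pi)=0\}$, $S^{+}(\pi)=\{i\in I:\lambda_i(\pi)>0\}$. *)

theory Defs
  imports "HOL-Analysis.Analysis"
begin

text \<open>Points of R^n are vectors of type real^'n (index set I = UNIV :: 'n set).\<close>

definition face :: "(real^'n) set \<Rightarrow> real^'n \<Rightarrow> real \<Rightarrow> (real^'n) set" where
  "face X \<sigma> \<sigma>0 = {x \<in> convex hull X. \<sigma> \<bullet> x = \<sigma>0}"

definition lam0 :: "(real^'n) set \<Rightarrow> real^'n \<Rightarrow> 'n \<Rightarrow> real" where
  "lam0 X \<pi> i = Max {\<pi> \<bullet> x | x. x \<in> X \<and> x $ i = 0}"

definition lam1 :: "(real^'n) set \<Rightarrow> real^'n \<Rightarrow> 'n \<Rightarrow> real" where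
  "lam1 X \<pi> i = Max {\<pi> \<bullet> x | x. x \<in> X \<and> x $ i = 1}"

definition lam :: "(real^'n) set \<Rightarrow> real^'n \<Rightarrow> 'n \<Rightarrow> real" where
  "lam X \<pi> i = lam0 X \<pi> i - lam1 X \<pi> i"

end

theory Submission
  imports Defs
begin

lemma hull_le:
  fixes X :: "(real^'n) set"
  assumes "\<forall>x\<in>X. a \<bullet> x \<le> b" "x \<in> convex hull X"
  shows "a \<bullet> x \<le> b"
proof -
  have "convex hull X \<subseteq> {x. a \<bullet> x \<le> b}"
    by (rule hull_minimal) (use assms convex_halfspace_le in auto)
  then show ?thesis using assms by auto
qed

lemma finite_binary:
  fixes X :: "(real^'n) set"
  assumes "\<forall>x\<in>X. \<forall>j. x $ j = 0 \<or> x $ j = 1"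
  shows "finite X"
proof -
  have "X \<subseteq> (\<lambda>f. \<chi> j. f j) ` (UNIV \<rightarrow>\<^sub>E {0::real,1})"
  proof
    fix x assume "x \<in> X"
    then have "(\<lambda>j. x $ j) \<in> UNIV \<rightarrow>\<^sub>E {0::real,1}" using assms by auto
    moreover have "x = (\<chi> j. (\<lambda>j. x $ j) j)" by simp
    ultimately show "x \<in> (\<lambda>f. \<chi> j. f j) ` (UNIV \<rightarrow>\<^sub>E {0::real,1})" by blast
  qed
  moreover have "finite (UNIV \<rightarrow>\<^sub>E {0::real,1} :: ('n \<Rightarrow> real) set)" by (rule finite_PiE) (simp_all add: finite_class.finite_UNIV)
  ultimately show ?thesis using finite_subset by blast
qed

lemma max_facts:
  fixes X :: "(real^'n) set"
  assumes "finite X" "\<exists>x\<in>X. x $ i = c"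
  shows "(\<forall>x\<in>X. x $ i = c \<longrightarrow> \<pi> \<bullet> x \<le> Max {\<pi> \<bullet> x | x. x \<in> X \<and> x $ i = c})
       \<and> (\<exists>x\<in>X. x $ i = c \<and> \<pi> \<bullet> x = Max {\<pi> \<bullet> x | x. x \<in> X \<and> x $ i = c})"
proof -
  let ?S = "{\<pi> \<bullet> x | x. x \<in> X \<and> x $ i = c}"
  have fin: "finite ?S" using assms(1) by simp
  have ne: "?S \<noteq> {}" using assms(2) by auto
  have "Max ?S \<in> ?S" using Max_in[OF fin ne] .
  moreover have "\<forall>x\<in>X. x $ i = c \<longrightarrow> \<pi> \<bullet> x \<le> Max ?S" using Max_ge[OF fin] by blast
  ultimately show ?thesis by fastforce
qed

theorem theorem1:
  fixes X :: "(real^'n) set" and \<pi> :: "real^'n" and \<pi>0 :: real and i :: 'n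
  assumes binary: "\<forall>x\<in>X. \<forall>j. x $ j = 0 \<or> x $ j = 1"
    and valid: "\<forall>x\<in>X. \<pi> \<bullet> x \<le> \<pi>0"
    and supp: "\<exists>x\<in>X. \<pi> \<bullet> x = \<pi>0"
    and nontriv: "\<forall>j. (\<exists>x\<in>X. x $ j = 0) \<and> (\<exists>x\<in>X. x $ j = 1)"
    and lam_nz: "lam X \<pi> i \<noteq> 0"
  defines "\<pi>' \<equiv> (\<chi> j. if j = i then \<pi> $ j + lam X \<pi> i else \<pi> $ j)"
    and "\<pi>0' \<equiv> (if lam X \<pi> i > 0 then \<pi>0 else \<pi>0 + lam X \<pi> i)"
  shows "(\<forall>x\<in>X. \<pi>' \<bullet> x \<le> \<pi>0')
    \<and> face X \<pi> \<pi>0 \<subset> face X \<pi>' \<pi>0'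
    \<and> aff_dim (face X \<pi>' \<pi>0') \<ge> aff_dim (face X \<pi> \<pi>0) + 1
    \<and> (\<forall>xb::real^'n. (\<forall>j. 0 \<le> xb $ j \<and> xb $ j \<le> 1) \<and> \<pi> \<bullet> xb > \<pi>0
          \<longrightarrow> \<pi>' \<bullet> xb > \<pi>0')"
proof -
  define L where "L = lam X \<pi> i"
  define L0 where "L0 = lam0 X \<pi> i"
  define L1 where "L1 = lam1 X \<pi> i"
  have LL: "L = L0 - L1" unfolding L_def L0_def L1_def lam_def by simp
  have fin: "finite X" using finite_binary[OF binary] .
  have A0: "\<forall>x\<in>X. x $ i = 0 \<longrightarrow> \<pi> \<bullet> x \<le> L0" and B0: "\<exists>x\<in>X. x $ i = 0 \<and> \<pi> \<bullet> x = L0"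
    using max_facts[OF fin, of i 0 \<pi>] nontriv unfolding L0_def lam0_def by auto
  have A1: "\<forall>x\<in>X. x $ i = 1 \<longrightarrow> \<pi> \<bullet> x \<le> L1" and B1: "\<exists>x\<in>X. x $ i = 1 \<and> \<pi> \<bullet> x = L1"
    using max_facts[OF fin, of i 1 \<pi>] nontriv unfolding L1_def lam1_def by auto
  have p0: "\<pi>0 = max L0 L1"
  proof -
    obtain xs where xs: "xs \<in> X" "\<pi> \<bullet> xs = \<pi>0" using supp by auto
    have "\<pi>0 \<le> max L0 L1" using binary xs A0 A1 by force
    moreover have "L0 \<le> \<pi>0" "L1 \<le> \<pi>0" using B0 B1 valid by auto
    ultimately show ?thesis by linarith
  qed
  have pe: "\<pi>' = \<pi> + axis i L" unfolding \<pi>'_def L_def by (simp add: vec_eq_iff axis_def)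
  have pix: "\<And>x. \<pi>' \<bullet> x = \<pi> \<bullet> x + L * x $ i" unfolding pe by (simp add: inner_add_left inner_axis')
  define c where "c = (if L > 0 then 0 else (1::real))"
  have p0': "\<pi>0' = \<pi>0 + L * c" unfolding \<pi>0'_def c_def L_def by simp
  have Lnz: "L \<noteq> 0" using lam_nz L_def by simp
  have v1: "\<forall>x\<in>X. \<pi>' \<bullet> x \<le> \<pi>0'"
  proof
    fix x assume x: "x \<in> X"
    show "\<pi>' \<bullet> x \<le> \<pi>0'" unfolding pix p0' c_def
      using binary x A0 A1 p0 LL by (cases "x $ i = 0") force+
  qed
  have vh: "\<And>x. x \<in> convex hull X \<Longrightarrow> \<pi>' \<bullet> x \<le> \<pi>0'" using hull_le[OF v1] by blast
  have h0: "\<And>x. x \<in> convex hull X \<Longrightarrow> 0 \<le> x $ i"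
  proof -
    fix x assume "x \<in> convex hull X"
    moreover have "\<forall>y\<in>X. (axis i (-1)) \<bullet> y \<le> 0"
    proof
      fix y assume "y \<in> X" then have "y$i = 0 \<or> y$i = 1" using binary by auto
      then show "axis i (-1) \<bullet> y \<le> 0" by (auto simp: inner_axis')
    qed
    ultimately have "(axis i (-1)) \<bullet> x \<le> 0" using hull_le by blast
    then show "0 \<le> x $ i" by (simp add: inner_axis')
  qed
  have h1: "\<And>x. x \<in> convex hull X \<Longrightarrow> x $ i \<le> 1"
  proof -
    fix x assume "x \<in> convex hull X"
    moreover have "\<forall>y\<in>X. (axis i 1) \<bullet> y \<le> 1"
    proof
      fix y assume "y \<in> X" then have "y$i = 0 \<or> y$i = 1" using binary by auto
      then show "axis i 1 \<bullet> y \<le> 1" by (auto simp: inner_axis')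
    qed
    ultimately have "(axis i 1) \<bullet> x \<le> 1" using hull_le by blast
    then show "x $ i \<le> 1" by (simp add: inner_axis')
  qed
  have oc: "\<And>x. x \<in> face X \<pi> \<pi>0 \<Longrightarrow> x $ i = c"
  proof -
    fix x assume "x \<in> face X \<pi> \<pi>0"
    then have x: "x \<in> convex hull X" "\<pi> \<bullet> x = \<pi>0" unfolding face_def by auto
    have "\<pi>0 + L * x $ i \<le> \<pi>0 + L * c" using vh[OF x(1)] x(2) unfolding pix p0' by simp
    then show "x $ i = c" using h0[OF x(1)] h1[OF x(1)] Lnz unfolding c_def
      by (cases "L > 0") (auto simp: mult_le_cancel_left mult_le_0_iff)
  qed
  have sub: "face X \<pi> \<pi>0 \<subseteq> face X \<pi>' \<pi>0'"
  proof
    fix x assume x: "x \<in> face X \<pi> \<pi>0"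
    then show "x \<in> face X \<pi>' \<pi>0'" using oc[OF x] unfolding face_def pix p0' by auto
  qed
  obtain p where p: "p \<in> X" "p $ i \<noteq> c" "\<pi>' \<bullet> p = \<pi>0'"
  proof (cases "L > 0")
    case True
    then obtain x where "x \<in> X" "x $ i = 1" "\<pi> \<bullet> x = L1" using B1 by auto
    then show ?thesis using that True p0 LL unfolding pix p0' c_def by auto
  next
    case False
    then obtain x where "x \<in> X" "x $ i = 0" "\<pi> \<bullet> x = L0" using B0 by auto
    then show ?thesis using that False Lnz p0 LL unfolding pix p0' c_def by auto
  qed
  have pin: "p \<in> face X \<pi>' \<pi>0'" using p hull_inc[of p X] unfolding face_def by auto
  have pout: "p \<notin> face X \<pi> \<pi>0" using oc p(2) by blast
  have strict: "face X \<pi> \<pi>0 \<subset> face X \<pi>' \<pi>0'" using sub pin pout by blast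
  have ah: "affine hull (face X \<pi> \<pi>0) \<subseteq> {x. x $ i = c}"
    by (rule hull_minimal) (use oc affine_hyperplane[of "axis i 1" c] in \<open>auto simp: inner_commute cart_eq_inner_axis\<close>)
  have pnot: "p \<notin> affine hull (face X \<pi> \<pi>0)" using ah p(2) by (auto simp: inner_axis')
  have "aff_dim (insert p (face X \<pi> \<pi>0)) = aff_dim (face X \<pi> \<pi>0) + 1"
    using aff_dim_insert[of p "face X \<pi> \<pi>0"] pnot by presburger
  moreover have "aff_dim (insert p (face X \<pi> \<pi>0)) \<le> aff_dim (face X \<pi>' \<pi>0')"
    by (rule aff_dim_subset) (use sub pin in auto)
  ultimately have dim: "aff_dim (face X \<pi>' \<pi>0') \<ge> aff_dim (face X \<pi> \<pi>0) + 1" by simp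
  have cut: "\<forall>xb::real^'n. (\<forall>j. 0 \<le> xb $ j \<and> xb $ j \<le> 1) \<and> \<pi> \<bullet> xb > \<pi>0
          \<longrightarrow> \<pi>' \<bullet> xb > \<pi>0'"
  proof (intro allI impI)
    fix xb :: "real^'n" assume a: "(\<forall>j. 0 \<le> xb $ j \<and> xb $ j \<le> 1) \<and> \<pi> \<bullet> xb > \<pi>0"
    then have b: "0 \<le> xb $ i" "xb $ i \<le> 1" by auto
    show "\<pi>' \<bullet> xb > \<pi>0'"
    proof (cases "L > 0")
      case True
      then have "L * xb $ i \<ge> 0" using b by simp
      moreover have "\<pi>0' = \<pi>0" using True unfolding p0' c_def by simp
      ultimately show ?thesis using a pix[of xb] by linarith
    next
      case False
      then have "L * xb $ i \<ge> L * 1" using b Lnz by (intro mult_left_mono_neg) auto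
      moreover have "\<pi>0' = \<pi>0 + L" using False unfolding p0' c_def by simp
      ultimately show ?thesis using a pix[of xb] by linarith
    qed
  qed
  show ?thesis using v1 strict dim cut by blast
qed

end
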